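(* Let $(V,\|\cdot\|)$ be a normed plane with unit circle $S$ and let $x,y\in V$ be nonzero with $x\dashv_B y$. Then $\|T_{xy}(z)\|\le 3$ for every $z\in S$. Moreover, if $\|T_{xy}(z)\|=3$ for some $z\in S$, then the plane is rectilinear (its unit circle is a parallelogram).
   Context: A normed (Minkowski) plane $(V,\|\cdot\|)$ is a two-dimensional real vector space with a norm; $S=\{v:\|v\|=1\}$ is its unit circle. For nonzero $x,y$, $x$ is Birkhoff orthogonal to $y$, written $x\dashv_B y$, if $\|x+ty\|\ge\|x\|$ for all $t\in\mathbb{R}$ (this forces $x,y$ to be linearly independent). For linearly independent $x,y\in V$, $T_{xy}:V\to V$ is the linear map with $T_{xy}(x)=x$ and $T_{xy}(y)=-y$. A normed plane is rectilinear if its unit circle is a parallelogram. *)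

theory Defs
  imports "HOL-Analysis.Analysis"
begin

text \<open>A normed plane is modelled as the real vector space \<open>real^2\<close> equipped with an
  arbitrary norm \<open>N\<close> (every two-dimensional real vector space is linearly isomorphic to it).\<close>

definition is_norm :: "(real^2 \<Rightarrow> real) \<Rightarrow> bool" where
  "is_norm N \<longleftrightarrow>
     (\<forall>v. N v = 0 \<longleftrightarrow> v = 0) \<and>
     (\<forall>c v. N (c *\<^sub>R v) = \<bar>c\<bar> * N v) \<and>
     (\<forall>u v. N (u + v) \<le> N u + N v)"

definition unit_circle :: "(real^2 \<Rightarrow> real) \<Rightarrow> (real^2) set" where
  "unit_circle N = {v. N v = 1}"

definition birkhoff_orth :: "(real^2 \<Rightarrow> real) \<Rightarrow> real^2 \<Rightarrow> real^2 \<Rightarrow> bool" where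
  "birkhoff_orth N x y \<longleftrightarrow> x \<noteq> 0 \<and> y \<noteq> 0 \<and> (\<forall>t::real. N (x + t *\<^sub>R y) \<ge> N x)"

definition T_map :: "real^2 \<Rightarrow> real^2 \<Rightarrow> (real^2 \<Rightarrow> real^2)" where
  "T_map x y = (THE T. linear T \<and> T x = x \<and> T y = - y)"

definition is_parallelogram :: "(real^2) set \<Rightarrow> bool" where
  "is_parallelogram P \<longleftrightarrow>
     (\<exists>p a b. a \<noteq> b \<and> independent {a, b} \<and>
        P = frontier {p + s *\<^sub>R a + t *\<^sub>R b | s t. 0 \<le> s \<and> s \<le> 1 \<and> 0 \<le> t \<and> t \<le> 1})"

definition rectilinear :: "(real^2 \<Rightarrow> real) \<Rightarrow> bool" where
  "rectilinear N \<longleftrightarrow> is_parallelogram (unit_circle N)"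

end

theory Submission
  imports Defs
begin


lemma nb:
  assumes "is_norm N"
  shows N0: "N 0 = 0" and Nneg: "N (- v) = N v" and Nsc: "N (c *\<^sub>R v) = \<bar>c\<bar> * N v"
    and Ntri: "N (u + v) \<le> N u + N v" and Nnn: "0 \<le> N v"
    and Nsub: "N (u - v) \<le> N u + N v"
proof -
  show 1: "N 0 = 0" using assms unfolding is_norm_def by blast
  show 2: "N (c *\<^sub>R v) = \<bar>c\<bar> * N v" using assms unfolding is_norm_def by blast
  have sc: "\<And>c v. N (c *\<^sub>R v) = \<bar>c\<bar> * N v" using assms unfolding is_norm_def by blast
  show 3: "N (- v) = N v" using sc[of "-1" v] by simp
  show 4: "N (u + v) \<le> N u + N v" using assms unfolding is_norm_def by blast
  have "N (v + - v) \<le> N v + N (- v)" using assms unfolding is_norm_def by blast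
  then show "0 \<le> N v" using 1 sc[of "-1" v] by simp
  show "N (u - v) \<le> N u + N v" using assms unfolding is_norm_def
    by (metis sc[of "-1" v] abs_neg_one mult_1 scaleR_minus1_left diff_conv_add_uminus)
qed

lemma decomp:
  fixes x y z :: "real^2"
  assumes d: "x$1*y$2 - x$2*y$1 \<noteq> 0"
  shows "z = ((z$1*y$2 - z$2*y$1)/(x$1*y$2 - x$2*y$1)) *\<^sub>R x
           + ((x$1*z$2 - x$2*z$1)/(x$1*y$2 - x$2*y$1)) *\<^sub>R y"
proof -
  define D where "D = x$1*y$2 - x$2*y$1"
  have D: "D \<noteq> 0" using d D_def by simp
  have e1: "z$1 * D = (z$1*y$2 - z$2*y$1) * x$1 + (x$1*z$2 - x$2*z$1) * y$1"
    unfolding D_def by algebra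
  have e2: "z$2 * D = (z$1*y$2 - z$2*y$1) * x$2 + (x$1*z$2 - x$2*z$1) * y$2"
    unfolding D_def by algebra
  have "((z$1*y$2 - z$2*y$1)/D) * x$1 + ((x$1*z$2 - x$2*z$1)/D) * y$1
     = ((z$1*y$2 - z$2*y$1) * x$1 + (x$1*z$2 - x$2*z$1) * y$1) / D"
    by (simp add: add_divide_distrib)
  also have "\<dots> = z$1" using e1[symmetric] D by simp
  moreover have "((z$1*y$2 - z$2*y$1)/D) * x$2 + ((x$1*z$2 - x$2*z$1)/D) * y$2
     = ((z$1*y$2 - z$2*y$1) * x$2 + (x$1*z$2 - x$2*z$1) * y$2) / D"
    by (simp add: add_divide_distrib)
  moreover have "\<dots> = z$2" using e2[symmetric] D by simp
  ultimately show ?thesis unfolding D_def[symmetric] by (simp add: vec_eq_iff forall_2)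
qed

lemma T_props:
  fixes x y :: "real^2"
  assumes d: "x$1*y$2 - x$2*y$1 \<noteq> 0"
  shows "linear (T_map x y) \<and> T_map x y x = x \<and> T_map x y y = - y"
proof -
  define D where "D = x$1*y$2 - x$2*y$1"
  define T where "T = (\<lambda>z::real^2. ((z$1*y$2 - z$2*y$1)/D) *\<^sub>R x - ((x$1*z$2 - x$2*z$1)/D) *\<^sub>R y)"
  have D: "D \<noteq> 0" using d D_def by simp
  have lin: "linear T"
  proof (rule linearI)
    fix u v :: "real^2" and r :: real
    have c1a: "(((u+v)$1*y$2 - (u+v)$2*y$1)/D) = ((u$1*y$2 - u$2*y$1)/D) + ((v$1*y$2 - v$2*y$1)/D)"
    proof -
      have "((u+v)$1*y$2 - (u+v)$2*y$1) = (u$1*y$2 - u$2*y$1) + (v$1*y$2 - v$2*y$1)"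
        by (simp add: distrib_right)
      then show ?thesis by (simp add: add_divide_distrib)
    qed
    have c2a: "((x$1*(u+v)$2 - x$2*(u+v)$1)/D) = ((x$1* u$2 - x$2* u$1)/D) + ((x$1* v$2 - x$2* v$1)/D)"
    proof -
      have "(x$1*(u+v)$2 - x$2*(u+v)$1) = (x$1* u$2 - x$2* u$1) + (x$1* v$2 - x$2* v$1)"
        by (simp add: distrib_left)
      then show ?thesis by (simp add: add_divide_distrib)
    qed
    show "T (u + v) = T u + T v" unfolding T_def c1a c2a by (simp add: scaleR_add_left)
    have c1s: "(((r *\<^sub>R u)$1*y$2 - (r *\<^sub>R u)$2*y$1)/D) = r * ((u$1*y$2 - u$2*y$1)/D)"
    proof -
      have "((r *\<^sub>R u)$1*y$2 - (r *\<^sub>R u)$2*y$1) = r * (u$1*y$2 - u$2*y$1)"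
        by (simp add: right_diff_distrib)
      then show ?thesis by simp
    qed
    have c2s: "((x$1*(r *\<^sub>R u)$2 - x$2*(r *\<^sub>R u)$1)/D) = r * ((x$1* u$2 - x$2* u$1)/D)"
    proof -
      have "(x$1*(r *\<^sub>R u)$2 - x$2*(r *\<^sub>R u)$1) = r * (x$1* u$2 - x$2* u$1)"
        by (simp add: right_diff_distrib)
      then show ?thesis by simp
    qed
    show "T (r *\<^sub>R u) = r *\<^sub>R T u" unfolding T_def c1s c2s by (simp add: scaleR_diff_right)
  qed
  have a1: "(x$1*y$2 - x$2*y$1)/D = 1" "(x$1*x$2 - x$2*x$1)/D = 0"
    "(y$1*y$2 - y$2*y$1)/D = 0" "(x$1*y$2 - x$2*y$1)/D = 1"
    using D by (simp_all add: D_def mult.commute)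
  have Tx: "T x = x" unfolding T_def a1 by simp
  have Ty: "T y = - y" unfolding T_def a1 by simp
  have uniq: "T' = T" if "linear T' \<and> T' x = x \<and> T' y = - y" for T'
  proof
    fix z
    have z: "z = ((z$1*y$2 - z$2*y$1)/D) *\<^sub>R x + ((x$1*z$2 - x$2*z$1)/D) *\<^sub>R y"
      unfolding D_def by (rule decomp[OF d])
    have "T' z = T' (((z$1*y$2 - z$2*y$1)/D) *\<^sub>R x + ((x$1*z$2 - x$2*z$1)/D) *\<^sub>R y)"
      by (rule arg_cong[of _ _ T'], rule z)
    also have "\<dots> = T z" using that by (simp add: linear_add linear_scale T_def)
    finally show "T' z = T z" .
  qed
  have "T_map x y = T" unfolding T_map_def
    by (rule the_equality) (use lin Tx Ty in blast, use uniq in blast)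
  then show ?thesis using lin Tx Ty by metis
qed

lemma T_apply:
  fixes x y :: "real^2"
  assumes d: "x$1*y$2 - x$2*y$1 \<noteq> 0"
  shows "T_map x y (a *\<^sub>R x + b *\<^sub>R y) = a *\<^sub>R x - b *\<^sub>R y"
  using T_props[OF d] by (simp add: linear_add linear_scale)



lemma indep2:
  fixes a b :: "real^2"
  assumes "b \<noteq> 0" "\<And>c. a \<noteq> c *\<^sub>R b" "a \<noteq> b"
  shows "independent {a, b}"
  using assms by (auto simp: independent_insert real_vector.span_singleton)

lemma Npos: assumes "is_norm N" "v \<noteq> 0" shows "0 < N v"
  using assms nb(5)[OF assms(1), of v] unfolding is_norm_def by (metis less_eq_real_def)

lemma dep_contra:
  assumes n: "is_norm N" and b: "birkhoff_orth N x y" and c: "c \<noteq> 0" and y: "y = c *\<^sub>R x"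
  shows False
proof -
  have "N (x + (-1/c) *\<^sub>R y) \<ge> N x" using b unfolding birkhoff_orth_def by blast
  moreover have "x + (-1/c) *\<^sub>R y = 0" using c y by simp
  moreover have "0 < N x" using b Npos[OF n] unfolding birkhoff_orth_def by blast
  ultimately show False using nb(1)[OF n] by simp
qed

lemma dnz:
  assumes n: "is_norm N" and b: "birkhoff_orth N x y"
  shows "x$1*y$2 - x$2*y$1 \<noteq> 0"
proof
  assume d: "x$1*y$2 - x$2*y$1 = 0"
  have x0: "x \<noteq> 0" and y0: "y \<noteq> 0" using b unfolding birkhoff_orth_def by auto
  show False
  proof (cases "x$1 = 0")
    case False
    define c where "c = y$1 / x$1"
    have "y = c *\<^sub>R x"
    proof -
      have "y$1 = c * x$1" using False by (simp add: c_def)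
      moreover have "y$2 = c * x$2" using False d
        by (simp add: c_def field_simps)
      ultimately show ?thesis by (simp add: vec_eq_iff forall_2)
    qed
    moreover have "c \<noteq> 0" using calculation y0 by auto
    ultimately show False using dep_contra[OF n b] by blast
  next
    case True
    then have x2: "x$2 \<noteq> 0" using x0 by (simp add: vec_eq_iff forall_2)
    define c where "c = y$2 / x$2"
    have "y = c *\<^sub>R x"
    proof -
      have "y$2 = c * x$2" using x2 by (simp add: c_def)
      moreover have "y$1 = c * x$1" using True x2 d by (simp add: c_def)
      ultimately show ?thesis by (simp add: vec_eq_iff forall_2)
    qed
    moreover have "c \<noteq> 0" using calculation y0 by auto
    ultimately show False using dep_contra[OF n b] by blast
  qed
qed

lemma bk:
  assumes n: "is_norm N" and b: "birkhoff_orth N x y"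
  shows "\<bar>a\<bar> * N x \<le> N (a *\<^sub>R x + t *\<^sub>R y)"
proof (cases "a = 0")
  case True then show ?thesis using nb(5)[OF n] by simp
next
  case False
  have "a *\<^sub>R x + t *\<^sub>R y = a *\<^sub>R (x + (t/a) *\<^sub>R y)" using False by (simp add: scaleR_add_right)
  then have "N (a *\<^sub>R x + t *\<^sub>R y) = \<bar>a\<bar> * N (x + (t/a) *\<^sub>R y)" using nb(3)[OF n] by simp
  moreover have "N (x + (t/a) *\<^sub>R y) \<ge> N x" using b unfolding birkhoff_orth_def by blast
  ultimately show ?thesis by (simp add: mult_left_mono)
qed

lemma lin_eq:
  assumes n: "is_norm N" and e: "N (p + q) = N p + N q" and l: "0 \<le> l" and m: "0 \<le> m"
  shows "N (l *\<^sub>R p + m *\<^sub>R q) = l * N p + m * N q"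
proof (rule antisym)
  show "N (l *\<^sub>R p + m *\<^sub>R q) \<le> l * N p + m * N q"
    using nb(4)[OF n, of "l *\<^sub>R p" "m *\<^sub>R q"] nb(3)[OF n] l m by simp
  show "l * N p + m * N q \<le> N (l *\<^sub>R p + m *\<^sub>R q)"
  proof (cases "m \<le> l")
    case True
    have "l *\<^sub>R (p + q) = (l *\<^sub>R p + m *\<^sub>R q) + (l - m) *\<^sub>R q" by (simp add: algebra_simps)
    then have "N (l *\<^sub>R (p + q)) \<le> N (l *\<^sub>R p + m *\<^sub>R q) + N ((l - m) *\<^sub>R q)"
      using nb(4)[OF n] by metis
    moreover have "N (l *\<^sub>R (p + q)) = l * (N p + N q)" using nb(3)[OF n] e l by simp
    moreover have "N ((l - m) *\<^sub>R q) = (l - m) * N q" using nb(3)[OF n] True by simp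
    ultimately show ?thesis by (simp add: algebra_simps)
  next
    case False
    have "m *\<^sub>R (p + q) = (l *\<^sub>R p + m *\<^sub>R q) + (m - l) *\<^sub>R p" by (simp add: algebra_simps)
    then have "N (m *\<^sub>R (p + q)) \<le> N (l *\<^sub>R p + m *\<^sub>R q) + N ((m - l) *\<^sub>R p)"
      using nb(4)[OF n] by metis
    moreover have "N (m *\<^sub>R (p + q)) = m * (N p + N q)" using nb(3)[OF n] e m by simp
    moreover have "N ((m - l) *\<^sub>R p) = (m - l) * N p" using nb(3)[OF n] False by simp
    ultimately show ?thesis by (simp add: algebra_simps)
  qed
qed

lemma Nlip:
  assumes n: "is_norm N"
  shows "continuous_on UNIV N"
proof -
  define C where "C = N (axis 1 1) + N (axis 2 1)"
  have C0: "0 \<le> C" using nb(5)[OF n] C_def by (simp add: add_nonneg_nonneg)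
  have bnd: "N v \<le> C * norm v" for v :: "real^2"
  proof -
    have v: "v = (v$1) *\<^sub>R axis 1 1 + (v$2) *\<^sub>R axis 2 1"
      by (simp add: vec_eq_iff forall_2 axis_def)
    have "N v \<le> N ((v$1) *\<^sub>R axis 1 1) + N ((v$2) *\<^sub>R axis 2 1)"
      using nb(4)[OF n] v by metis
    also have "\<dots> = \<bar>v$1\<bar> * N (axis 1 1) + \<bar>v$2\<bar> * N (axis 2 1)" using nb(3)[OF n] by simp
    also have "\<dots> \<le> norm v * N (axis 1 1) + norm v * N (axis 2 1)"
      by (intro add_mono mult_right_mono component_le_norm_cart nb(5)[OF n])
    finally show ?thesis by (simp add: C_def algebra_simps)
  qed
  have "C-lipschitz_on UNIV N"
  proof (rule lipschitz_onI[OF _ C0])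
    fix a b :: "real^2"
    have "N a \<le> N (a - b) + N b" using nb(4)[OF n, of "a - b" b] by simp
    moreover have "N b \<le> N (b - a) + N a" using nb(4)[OF n, of "b - a" a] by simp
    moreover have "N (b - a) = N (a - b)" using nb(2)[OF n, of "a - b"] by simp
    ultimately have "\<bar>N a - N b\<bar> \<le> N (a - b)" by linarith
    also have "\<dots> \<le> C * norm (a - b)" by (rule bnd)
    finally show "dist (N a) (N b) \<le> C * dist a b" by (simp add: dist_norm dist_real_def)
  qed
  then show ?thesis by (rule lipschitz_on_continuous_on)
qed

lemma frontier_N:
  assumes n: "is_norm N"
  shows "frontier {v. N v \<le> 1} = {v. N v = 1}"
proof -
  have cont: "continuous_on UNIV N" by (rule Nlip[OF n])
  have cl: "closed {v. N v \<le> 1}"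
    using closed_Collect_le[OF cont continuous_on_const] by simp
  have op: "open {v. N v < 1}"
    using open_Collect_less[OF cont continuous_on_const] by simp
  have int: "interior {v. N v \<le> 1} = {v. N v < 1}"
  proof
    show "{v. N v < 1} \<subseteq> interior {v. N v \<le> 1}"
      using op by (intro interior_maximal) auto
    show "interior {v. N v \<le> 1} \<subseteq> {v. N v < 1}"
    proof
      fix v assume v: "v \<in> interior {v. N v \<le> 1}"
      then obtain e where e: "e > 0" "ball v e \<subseteq> {v. N v \<le> 1}" by (auto simp: mem_interior)
      have le: "N v \<le> 1" using v interior_subset by blast
      show "v \<in> {v. N v < 1}"
      proof (rule ccontr)
        assume "v \<notin> {v. N v < 1}"
        then have N1: "N v = 1" using le by simp
        then have v0: "v \<noteq> 0" using nb(1)[OF n] by auto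
        define d where "d = e / (2 * norm v)"
        have d0: "d > 0" using e v0 by (simp add: d_def)
        have "dist v ((1 + d) *\<^sub>R v) = d * norm v"
          using d0 by (simp add: dist_norm algebra_simps)
        also have "\<dots> = e / 2" using v0 by (simp add: d_def)
        finally have "(1 + d) *\<^sub>R v \<in> ball v e" using e by simp
        then have "N ((1 + d) *\<^sub>R v) \<le> 1" using e by blast
        moreover have "N ((1 + d) *\<^sub>R v) = 1 + d" using nb(3)[OF n] N1 d0 by simp
        ultimately show False using d0 by simp
      qed
    qed
  qed
  show ?thesis unfolding frontier_def closure_closed[OF cl] int by auto
qed



lemma key:
  assumes n: "is_norm N" and b: "birkhoff_orth N x y" and z: "N z = 1"
  shows "\<exists>a t. z = a *\<^sub>R x + t *\<^sub>R y \<and> T_map x y z = a *\<^sub>R x - t *\<^sub>R y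
     \<and> \<bar>a\<bar> * N x \<le> 1 \<and> N (T_map x y z) \<le> 2 * (\<bar>a\<bar> * N x) + 1"
proof -
  have d: "x$1*y$2 - x$2*y$1 \<noteq> 0" by (rule dnz[OF n b])
  obtain a t where zz: "z = a *\<^sub>R x + t *\<^sub>R y" using decomp[OF d, of z] by blast
  have T: "T_map x y z = a *\<^sub>R x - t *\<^sub>R y" unfolding zz by (rule T_apply[OF d])
  have A: "\<bar>a\<bar> * N x \<le> 1" using bk[OF n b, of a t] zz z by simp
  have 2: "(2 * a) *\<^sub>R x = a *\<^sub>R x + a *\<^sub>R x" by (metis mult_2 scaleR_add_left)
  have "a *\<^sub>R x - t *\<^sub>R y = (2 * a) *\<^sub>R x - z" unfolding zz 2 by (simp add: algebra_simps)
  then have "N (T_map x y z) \<le> N ((2 * a) *\<^sub>R x) + N z" using T nb(6)[OF n] by metis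
  also have "\<dots> = 2 * (\<bar>a\<bar> * N x) + 1" using nb(3)[OF n] z by (simp add: abs_mult)
  finally show ?thesis using zz T A by blast
qed



lemma rect_of:
  assumes n: "is_norm N" and b: "birkhoff_orth N x y" and z: "N z = 1"
    and e: "N (T_map x y z) = 3"
  shows "rectilinear N"
proof -
  have d: "x$1*y$2 - x$2*y$1 \<noteq> 0" by (rule dnz[OF n b])
  obtain a t where zz: "z = a *\<^sub>R x + t *\<^sub>R y" and T: "T_map x y z = a *\<^sub>R x - t *\<^sub>R y"
    and A: "\<bar>a\<bar> * N x \<le> 1" and B: "N (T_map x y z) \<le> 2 * (\<bar>a\<bar> * N x) + 1"
    using key[OF n b z] by blast
  have ax: "\<bar>a\<bar> * N x = 1" using A B e by linarith
  define u where "u = a *\<^sub>R x"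
  define w where "w = z"
  have Nu: "N u = 1" using ax nb(3)[OF n] u_def by simp
  have Nw: "N w = 1" using z w_def by simp
  have wu: "w = u + t *\<^sub>R y" using zz u_def w_def by simp
  have a0: "a \<noteq> 0" using ax by auto
  have 2: "(2::real) *\<^sub>R u = u + u" by (metis one_add_one scaleR_add_left scaleR_one)
  have "2 *\<^sub>R u - w = u - t *\<^sub>R y" unfolding 2 wu by simp
  then have Tz: "T_map x y z = 2 *\<^sub>R u - w" unfolding T u_def by simp
  have N3: "N (2 *\<^sub>R u - w) = 3" using e Tz by simp
  have t0: "t \<noteq> 0"
  proof
    assume "t = 0"
    then have "2 *\<^sub>R u - w = u" using wu 2 by simp
    then show False using N3 Nu by simp
  qed
  have bu: "1 \<le> N (u + s *\<^sub>R y)" for s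
    using bk[OF n b, of a s] ax u_def by simp
  have seg: "N ((1 - s) *\<^sub>R u + s *\<^sub>R w) = 1" if s: "0 \<le> s" "s \<le> 1" for s
  proof (rule antisym)
    have "N ((1 - s) *\<^sub>R u + s *\<^sub>R w) \<le> N ((1 - s) *\<^sub>R u) + N (s *\<^sub>R w)" by (rule nb(4)[OF n])
    also have "\<dots> = 1" using nb(3)[OF n] Nu Nw s by simp
    finally show "N ((1 - s) *\<^sub>R u + s *\<^sub>R w) \<le> 1" .
    have "(1 - s) *\<^sub>R u + s *\<^sub>R w = u + (s * t) *\<^sub>R y" unfolding wu by (simp add: algebra_simps)
    then show "1 \<le> N ((1 - s) *\<^sub>R u + s *\<^sub>R w)" using bu by simp
  qed
  have pos: "N (al *\<^sub>R u + be *\<^sub>R w) = al + be" if "0 \<le> al" "0 \<le> be" for al be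
  proof (cases "al + be = 0")
    case True then have "al = 0" "be = 0" using that by auto
    then show ?thesis using nb(1)[OF n] by simp
  next
    case False
    then have sp: "al + be > 0" using that by simp
    define s where "s = be / (al + be)"
    have s01: "0 \<le> s" "s \<le> 1" using that sp by (auto simp: s_def)
    have "al *\<^sub>R u + be *\<^sub>R w = (al + be) *\<^sub>R ((1 - s) *\<^sub>R u + s *\<^sub>R w)"
    proof -
      have "(al + be) * (1 - s) = al" "(al + be) * s = be" using sp by (simp_all add: s_def field_simps)
      then show ?thesis by (simp add: scaleR_add_right)
    qed
    then show ?thesis using nb(3)[OF n] seg[OF s01] sp by simp
  qed
  have mix: "N (al *\<^sub>R u - ga *\<^sub>R w) = al + ga" if "0 \<le> al" "0 \<le> ga" for al ga
  proof -
    have e3: "N (2 *\<^sub>R u + - w) = N (2 *\<^sub>R u) + N (- w)"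
      using N3 nb(3)[OF n, of 2 u] nb(2)[OF n, of w] Nu Nw by simp
    have "al *\<^sub>R u - ga *\<^sub>R w = (al/2) *\<^sub>R (2 *\<^sub>R u) + ga *\<^sub>R (- w)" by simp
    then have "N (al *\<^sub>R u - ga *\<^sub>R w) = (al/2) * N (2 *\<^sub>R u) + ga * N (- w)"
      using lin_eq[OF n e3, of "al/2" ga] that by simp
    then show ?thesis using nb(3)[OF n, of 2 u] nb(2)[OF n, of w] Nu Nw by simp
  qed
  have nf: "N (al *\<^sub>R u + be *\<^sub>R w) = \<bar>al\<bar> + \<bar>be\<bar>" for al be
  proof (cases "0 \<le> al")
    case True
    show ?thesis
    proof (cases "0 \<le> be")
      case True then show ?thesis using pos \<open>0 \<le> al\<close> by simp
    next
      case False then show ?thesis using mix[of al "- be"] \<open>0 \<le> al\<close> by simp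
    qed
  next
    case False
    have neg: "N (al *\<^sub>R u + be *\<^sub>R w) = N ((- al) *\<^sub>R u + (- be) *\<^sub>R w)"
      using nb(2)[OF n, of "al *\<^sub>R u + be *\<^sub>R w"] by (simp add: algebra_simps)
    show ?thesis
    proof (cases "0 \<le> be")
      case True then show ?thesis using mix[of "- al" be] False neg by simp
    next
      case F2: False then show ?thesis using pos[of "- al" "- be"] False neg by simp
    qed
  qed
  have span: "\<exists>al be. v = al *\<^sub>R u + be *\<^sub>R w" for v
  proof -
    obtain c1 c2 where v: "v = c1 *\<^sub>R x + c2 *\<^sub>R y" using decomp[OF d, of v] by blast
    have "(c1/a - c2/t) *\<^sub>R u + (c2/t) *\<^sub>R w = v"
      unfolding v wu u_def using a0 t0 by (simp add: algebra_simps)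
    then show ?thesis by metis
  qed
  define P where "P = {(- u) + s *\<^sub>R (u + w) + r *\<^sub>R (u - w) | s r. 0 \<le> s \<and> s \<le> 1 \<and> 0 \<le> r \<and> r \<le> 1}"
  have rep: "(- u) + s *\<^sub>R (u + w) + r *\<^sub>R (u - w) = (s + r - 1) *\<^sub>R u + (s - r) *\<^sub>R w" for s r
    by (simp add: algebra_simps)
  have PN: "P = {v. N v \<le> 1}"
  proof
    show "P \<subseteq> {v. N v \<le> 1}"
    proof
      fix v assume "v \<in> P"
      then obtain s r where sr: "0 \<le> s" "s \<le> 1" "0 \<le> r" "r \<le> 1"
        and v: "v = (s + r - 1) *\<^sub>R u + (s - r) *\<^sub>R w" unfolding P_def rep by blast
      have "\<bar>s + r - 1\<bar> + \<bar>s - r\<bar> \<le> 1" using sr by arith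
      then show "v \<in> {v. N v \<le> 1}" using nf v by simp
    qed
    show "{v. N v \<le> 1} \<subseteq> P"
    proof
      fix v assume "v \<in> {v. N v \<le> 1}"
      then have le: "N v \<le> 1" by simp
      obtain al be where v: "v = al *\<^sub>R u + be *\<^sub>R w" using span by blast
      have ab: "\<bar>al\<bar> + \<bar>be\<bar> \<le> 1" using le nf v by simp
      define s where "s = (al + be + 1) / 2"
      define r where "r = (al - be + 1) / 2"
      have b1: "-1 \<le> al + be" "al + be \<le> 1" "-1 \<le> al - be" "al - be \<le> 1"
        using ab abs_ge_self[of al] abs_ge_self[of be] abs_ge_minus_self[of al] abs_ge_minus_self[of be]
        by linarith+
      have sr: "0 \<le> s" "s \<le> 1" "0 \<le> r" "r \<le> 1" using b1 unfolding s_def r_def by simp_all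
      have "s + r - 1 = al" "s - r = be" unfolding s_def r_def by (simp_all add: field_simps)
      then have "v = (- u) + s *\<^sub>R (u + w) + r *\<^sub>R (u - w)" unfolding rep v by simp
      then show "v \<in> P" unfolding P_def using sr by blast
    qed
  qed
  have Nuw: "N (u - w) = 2" using nf[of 1 "-1"] by simp
  have Nuw2: "N (u + w) = 2" using nf[of 1 1] by simp
  have ind: "independent {u + w, u - w}"
  proof (rule indep2)
    show "u - w \<noteq> 0" using Nuw nb(1)[OF n] by auto
    show "u + w \<noteq> c *\<^sub>R (u - w)" for c
    proof
      assume h: "u + w = c *\<^sub>R (u - w)"
      have "(1 - c) *\<^sub>R u + (1 + c) *\<^sub>R w = (u + w) - c *\<^sub>R (u - w)" by (simp add: algebra_simps)
      then have "(1 - c) *\<^sub>R u + (1 + c) *\<^sub>R w = 0" using h by simp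
      then have "\<bar>1 - c\<bar> + \<bar>1 + c\<bar> = 0" using nf[of "1 - c" "1 + c"] nb(1)[OF n] by simp
      then show False by arith
    qed
    show "u + w \<noteq> u - w"
    proof
      assume "u + w = u - w"
      then have "w = - w" by (metis add_left_cancel diff_conv_add_uminus)
      then have "w = 0" by (simp add: vec_eq_iff)
      then show False using Nw nb(1)[OF n] by simp
    qed
  qed
  have neq: "u + w \<noteq> u - w"
  proof
    assume "u + w = u - w"
    then have "w = - w" by (metis add_left_cancel diff_conv_add_uminus)
    then have "w = 0" by (simp add: vec_eq_iff)
    then show False using Nw nb(1)[OF n] by simp
  qed
  have "unit_circle N = frontier P" unfolding PN frontier_N[OF n] unit_circle_def ..
  then show ?thesis unfolding rectilinear_def is_parallelogram_def P_def
    using ind neq by blast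
qed


theorem lemma5p1:
  fixes N :: "real^2 \<Rightarrow> real" and x y :: "real^2"
  assumes "is_norm N"
    and "x \<noteq> 0" and "y \<noteq> 0"
    and "birkhoff_orth N x y"
  shows "(\<forall>z\<in>unit_circle N. N (T_map x y z) \<le> 3)
       \<and> ((\<exists>z\<in>unit_circle N. N (T_map x y z) = 3) \<longrightarrow> rectilinear N)"
proof (intro conjI ballI impI)
  fix z assume "z \<in> unit_circle N"
  then have z: "N z = 1" by (simp add: unit_circle_def)
  from key[OF assms(1) assms(4) z] show "N (T_map x y z) \<le> 3" by linarith
next
  assume "\<exists>z\<in>unit_circle N. N (T_map x y z) = 3"
  then obtain z where "N z = 1" "N (T_map x y z) = 3" by (auto simp: unit_circle_def)
  then show "rectilinear N" using rect_of[OF assms(1) assms(4)] by blast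
qed

end
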